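(* Let $S$ be a pogroup. In the full subcategory of $\mathbf{Pos}\text{-}S$ consisting of $S$-posets with trivial action, the pair $(Emb, Top)$ is a weak factorization system; in particular every $S$-poset map $f:X\to B$ between $S$-posets with trivial action factors as $f=g\circ m$ with $m:X\to Y$ an order-embedding, $g:Y\to B$ a topological monotone map, and $Y$ an $S$-poset with trivial action.
   Context: A pogroup is a group with a compatible partial order. $\mathbf{Pos}\text{-}S$: right $S$-posets and action-preserving monotone maps; trivial action means $as=a$ for all $a,s$. $Emb$ is the class of order-embeddings ($f(a)\le f(a')\iff a\le a'$); $Top$ is the class of monotone maps that are topological functors (posets as categories; a functor $G$ is topological if every $G$-structured source has a unique $G$-initial lift). A weak factorization system is a pair $(\mathcal L,\mathcal R)$ of morphism classes such that every morphism factors as an $\mathcal L$-morphism followed by an $\mathcal R$-morphism, $\mathcal R=\mathcal L^{\Box}$ and $\mathcal L={}^{\Box}\mathcal R$, where $\mathcal H^{\Box}$ and ${}^{\Box}\mathcal H$ denote the morphisms having the right, respectively left, lifting property (existence of diagonal fillers in commutative squares) against all members of $\mathcal H$. *)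

theory Defs
  imports "HOL-Algebra.Group"
begin

definition is_poset :: "'a set \<Rightarrow> ('a \<Rightarrow> 'a \<Rightarrow> bool) \<Rightarrow> bool" where
  "is_poset X r \<longleftrightarrow>
     (\<forall>x\<in>X. r x x) \<and>
     (\<forall>x\<in>X. \<forall>y\<in>X. r x y \<and> r y x \<longrightarrow> x = y) \<and>
     (\<forall>x\<in>X. \<forall>y\<in>X. \<forall>z\<in>X. r x y \<and> r y z \<longrightarrow> r x z)"

definition pogroup :: "'s monoid \<Rightarrow> ('s \<Rightarrow> 's \<Rightarrow> bool) \<Rightarrow> bool" where
  "pogroup G leS \<longleftrightarrow> group G \<and> is_poset (carrier G) leS \<and>
     (\<forall>a\<in>carrier G. \<forall>b\<in>carrier G. \<forall>c\<in>carrier G. leS a b \<longrightarrow>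
        leS (a \<otimes>\<^bsub>G\<^esub> c) (b \<otimes>\<^bsub>G\<^esub> c) \<and> leS (c \<otimes>\<^bsub>G\<^esub> a) (c \<otimes>\<^bsub>G\<^esub> b))"

record ('a, 's) spos =
  pcar :: "'a set"
  pleq :: "'a \<Rightarrow> 'a \<Rightarrow> bool"
  pact :: "'a \<Rightarrow> 's \<Rightarrow> 'a"

definition S_poset :: "'s monoid \<Rightarrow> ('s \<Rightarrow> 's \<Rightarrow> bool) \<Rightarrow> ('a, 's) spos \<Rightarrow> bool" where
  "S_poset G leS X \<longleftrightarrow> is_poset (pcar X) (pleq X) \<and>
     (\<forall>x\<in>pcar X. \<forall>s\<in>carrier G. pact X x s \<in> pcar X) \<and>
     (\<forall>x\<in>pcar X. pact X x \<one>\<^bsub>G\<^esub> = x) \<and>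
     (\<forall>x\<in>pcar X. \<forall>s\<in>carrier G. \<forall>t\<in>carrier G.
        pact X (pact X x s) t = pact X x (s \<otimes>\<^bsub>G\<^esub> t)) \<and>
     (\<forall>x\<in>pcar X. \<forall>y\<in>pcar X. \<forall>s\<in>carrier G.
        pleq X x y \<longrightarrow> pleq X (pact X x s) (pact X y s)) \<and>
     (\<forall>x\<in>pcar X. \<forall>s\<in>carrier G. \<forall>t\<in>carrier G.
        leS s t \<longrightarrow> pleq X (pact X x s) (pact X x t))"

definition triv_S_poset :: "'s monoid \<Rightarrow> ('s \<Rightarrow> 's \<Rightarrow> bool) \<Rightarrow> ('a, 's) spos \<Rightarrow> bool" where
  "triv_S_poset G leS X \<longleftrightarrow> S_poset G leS X \<and>
     (\<forall>x\<in>pcar X. \<forall>s\<in>carrier G. pact X x s = x)"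

definition S_map :: "'s monoid \<Rightarrow> ('a, 's) spos \<Rightarrow> ('b, 's) spos \<Rightarrow> ('a \<Rightarrow> 'b) \<Rightarrow> bool" where
  "S_map G X Y f \<longleftrightarrow>
     (\<forall>x\<in>pcar X. f x \<in> pcar Y) \<and>
     (\<forall>x\<in>pcar X. \<forall>x'\<in>pcar X. pleq X x x' \<longrightarrow> pleq Y (f x) (f x')) \<and>
     (\<forall>x\<in>pcar X. \<forall>s\<in>carrier G. f (pact X x s) = pact Y (f x) s)"

definition Emb :: "'s monoid \<Rightarrow> ('a, 's) spos \<Rightarrow> ('b, 's) spos \<Rightarrow> ('a \<Rightarrow> 'b) \<Rightarrow> bool" where
  "Emb G X Y f \<longleftrightarrow> S_map G X Y f \<and>
     (\<forall>x\<in>pcar X. \<forall>x'\<in>pcar X. pleq Y (f x) (f x') \<longleftrightarrow> pleq X x x')"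

text \<open>Class Top: monotone maps that are topological functors (posets as thin categories).
  A G-structured source is an object b of Y together with a family of objects a of X
  with morphisms b -> G a, i.e. b <= G a; it is given here by the set A of the targets.\<close>

definition Top :: "'s monoid \<Rightarrow> ('a, 's) spos \<Rightarrow> ('b, 's) spos \<Rightarrow> ('a \<Rightarrow> 'b) \<Rightarrow> bool" where
  "Top G X Y g \<longleftrightarrow> S_map G X Y g \<and>
     (\<forall>b\<in>pcar Y. \<forall>A. A \<subseteq> pcar X \<longrightarrow> (\<forall>a\<in>A. pleq Y b (g a)) \<longrightarrow>
        (\<exists>!x. x \<in> pcar X \<and> g x = b \<and> (\<forall>a\<in>A. pleq X x a) \<and>
              (\<forall>z\<in>pcar X. pleq Y (g z) b \<and> (\<forall>a\<in>A. pleq X z a) \<longrightarrow> pleq X z x)))"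

definition has_lift :: "'s monoid \<Rightarrow> ('a, 's) spos \<Rightarrow> ('b, 's) spos \<Rightarrow> ('a \<Rightarrow> 'b)
    \<Rightarrow> ('c, 's) spos \<Rightarrow> ('d, 's) spos \<Rightarrow> ('c \<Rightarrow> 'd) \<Rightarrow> bool" where
  "has_lift G A B l C D r \<longleftrightarrow>
     (\<forall>u v. S_map G A C u \<longrightarrow> S_map G B D v \<longrightarrow> (\<forall>a\<in>pcar A. r (u a) = v (l a)) \<longrightarrow>
        (\<exists>d. S_map G B C d \<and> (\<forall>a\<in>pcar A. d (l a) = u a) \<and> (\<forall>b\<in>pcar B. r (d b) = v b)))"

end

theory Submission
  imports Defs
begin

lemma smap_triv:
  "triv_S_poset G leS X \<Longrightarrow> triv_S_poset G leS Y \<Longrightarrow> S_map G X Y f \<longleftrightarrow>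
    (\<forall>x\<in>pcar X. f x \<in> pcar Y) \<and> (\<forall>x\<in>pcar X. \<forall>x'\<in>pcar X. pleq X x x' \<longrightarrow> pleq Y (f x) (f x'))"
  by (auto simp: triv_S_poset_def S_map_def)

lemma triv_poset: "triv_S_poset G leS X \<Longrightarrow> is_poset (pcar X) (pleq X)"
  by (simp add: triv_S_poset_def S_poset_def)

lemma top_ex:
  assumes "Top G X Y g" "b\<in>pcar Y" "A \<subseteq> pcar X" "\<forall>a\<in>A. pleq Y b (g a)"
  shows "\<exists>x. x \<in> pcar X \<and> g x = b \<and> (\<forall>a\<in>A. pleq X x a) \<and>
        (\<forall>z\<in>pcar X. pleq Y (g z) b \<and> (\<forall>a\<in>A. pleq X z a) \<longrightarrow> pleq X z x)"
proof -
  have "\<forall>b\<in>pcar Y. \<forall>A. A \<subseteq> pcar X \<longrightarrow> (\<forall>a\<in>A. pleq Y b (g a)) \<longrightarrow>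
        (\<exists>!x. x \<in> pcar X \<and> g x = b \<and> (\<forall>a\<in>A. pleq X x a) \<and>
              (\<forall>z\<in>pcar X. pleq Y (g z) b \<and> (\<forall>a\<in>A. pleq X z a) \<longrightarrow> pleq X z x))"
    using assms(1) unfolding Top_def by (rule conjunct2)
  then have "\<exists>!x. x \<in> pcar X \<and> g x = b \<and> (\<forall>a\<in>A. pleq X x a) \<and>
              (\<forall>z\<in>pcar X. pleq Y (g z) b \<and> (\<forall>a\<in>A. pleq X z a) \<longrightarrow> pleq X z x)"
    using assms(2-4) by simp
  then show ?thesis by (rule ex1_implies_ex)
qed

lemma po_refl: "is_poset X r \<Longrightarrow> x\<in>X \<Longrightarrow> r x x" unfolding is_poset_def by blast
lemma po_antisym: "is_poset X r \<Longrightarrow> x\<in>X \<Longrightarrow> y\<in>X \<Longrightarrow> r x y \<Longrightarrow> r y x \<Longrightarrow> x = y"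
  unfolding is_poset_def by blast
lemma po_trans: "is_poset X r \<Longrightarrow> x\<in>X \<Longrightarrow> y\<in>X \<Longrightarrow> z\<in>X \<Longrightarrow> r x y \<Longrightarrow> r y z \<Longrightarrow> r x z"
  unfolding is_poset_def by blast
lemma po_intro:
  assumes "\<And>x. x\<in>X \<Longrightarrow> r x x" "\<And>x y. x\<in>X \<Longrightarrow> y\<in>X \<Longrightarrow> r x y \<Longrightarrow> r y x \<Longrightarrow> x = y"
    "\<And>x y z. x\<in>X \<Longrightarrow> y\<in>X \<Longrightarrow> z\<in>X \<Longrightarrow> r x y \<Longrightarrow> r y z \<Longrightarrow> r x z"
  shows "is_poset X r" unfolding is_poset_def using assms by blast

lemma triv_mk:
  assumes "is_poset X r"
  shows "triv_S_poset G leS (\<lparr>pcar = X, pleq = r, pact = (\<lambda>x s. x)\<rparr> :: ('x,'s) spos)"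
  unfolding triv_S_poset_def S_poset_def using assms po_refl[OF assms] by simp

lemma top_intro:
  assumes "S_map G X Y g" "is_poset (pcar X) (pleq X)" "is_poset (pcar Y) (pleq Y)"
    "\<And>b A. b\<in>pcar Y \<Longrightarrow> A \<subseteq> pcar X \<Longrightarrow> (\<forall>a\<in>A. pleq Y b (g a)) \<Longrightarrow>
     (\<exists>x. x \<in> pcar X \<and> g x = b \<and> (\<forall>a\<in>A. pleq X x a) \<and>
        (\<forall>z\<in>pcar X. pleq Y (g z) b \<and> (\<forall>a\<in>A. pleq X z a) \<longrightarrow> pleq X z x))"
  shows "Top G X Y g"
  unfolding Top_def
proof (intro conjI ballI allI impI)
  show "S_map G X Y g" by fact
  fix b A assume b: "b \<in> pcar Y" and A: "A \<subseteq> pcar X" and h: "\<forall>a\<in>A. pleq Y b (g a)"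
  obtain x where x: "x \<in> pcar X \<and> g x = b \<and> (\<forall>a\<in>A. pleq X x a) \<and>
        (\<forall>z\<in>pcar X. pleq Y (g z) b \<and> (\<forall>a\<in>A. pleq X z a) \<longrightarrow> pleq X z x)"
    using assms(4)[OF b A h] by blast
  have rb: "pleq Y b b" using po_refl[OF assms(3) b] .
  show "\<exists>!x. x \<in> pcar X \<and> g x = b \<and> (\<forall>a\<in>A. pleq X x a) \<and>
        (\<forall>z\<in>pcar X. pleq Y (g z) b \<and> (\<forall>a\<in>A. pleq X z a) \<longrightarrow> pleq X z x)"
  proof (rule ex1I[of _ x])
    show "x \<in> pcar X \<and> g x = b \<and> (\<forall>a\<in>A. pleq X x a) \<and>
        (\<forall>z\<in>pcar X. pleq Y (g z) b \<and> (\<forall>a\<in>A. pleq X z a) \<longrightarrow> pleq X z x)" by fact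
    fix y assume y: "y \<in> pcar X \<and> g y = b \<and> (\<forall>a\<in>A. pleq X y a) \<and>
        (\<forall>z\<in>pcar X. pleq Y (g z) b \<and> (\<forall>a\<in>A. pleq X z a) \<longrightarrow> pleq X z y)"
    have "pleq X y x" using x y rb by auto
    moreover have "pleq X x y" using x y rb by auto
    ultimately show "y = x" using po_antisym[OF assms(2)] x y by blast
  qed
qed

lemma part1:
  assumes X: "triv_S_poset G leS (X::('a,'s) spos)" and B: "triv_S_poset G leS (B::('b,'s) spos)"
    and f: "S_map G X B f"
  shows "\<exists>(Y :: ('b \<times> 'a set, 's) spos) m g.
          triv_S_poset G leS Y \<and> Emb G X Y m \<and> Top G Y B g \<and>
          (\<forall>x\<in>pcar X. g (m x) = f x)"
proof -
  have PX: "is_poset (pcar X) (pleq X)" and PB: "is_poset (pcar B) (pleq B)"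
    using X B triv_poset by blast+
  have fi: "\<And>x. x\<in>pcar X \<Longrightarrow> f x \<in> pcar B" and fm: "\<And>x x'. x\<in>pcar X \<Longrightarrow> x'\<in>pcar X \<Longrightarrow> pleq X x x' \<Longrightarrow> pleq B (f x) (f x')"
    using f smap_triv[OF X B] by blast+
  define Yc where "Yc = {y. fst y \<in> pcar B \<and> snd y \<subseteq> pcar X \<and> (\<forall>s\<in>snd y. pleq B (f s) (fst y))}"
  define Yl where "Yl = (\<lambda>(y::'b \<times> 'a set) y'. pleq B (fst y) (fst y') \<and> snd y \<subseteq> snd y')"
  define Y where "Y = (\<lparr>pcar = Yc, pleq = Yl, pact = (\<lambda>x s. x)\<rparr> :: ('b \<times> 'a set, 's) spos)"
  define m where "m = (\<lambda>x. (f x, {y\<in>pcar X. pleq X y x}))"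
  have PY: "is_poset Yc Yl"
  proof (rule po_intro)
    fix x assume "x \<in> Yc" then show "Yl x x" unfolding Yc_def Yl_def using po_refl[OF PB] by simp
  next
    fix x y assume "x \<in> Yc" "y \<in> Yc" "Yl x y" "Yl y x"
    then show "x = y" unfolding Yc_def Yl_def
      by (metis (no_types, lifting) mem_Collect_eq po_antisym[OF PB] prod_eqI subset_antisym)
  next
    fix x y z assume "x \<in> Yc" "y \<in> Yc" "z \<in> Yc" "Yl x y" "Yl y z"
    then show "Yl x z" unfolding Yc_def Yl_def
      by (metis (no_types, lifting) mem_Collect_eq po_trans[OF PB] subset_trans)
  qed
  have TY: "triv_S_poset G leS Y" unfolding Y_def by (rule triv_mk[OF PY])
  have mono_m: "pleq Y (m x) (m x')" if x: "x \<in> pcar X" and x': "x' \<in> pcar X" and le: "pleq X x x'" for x x'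
  proof -
    have "{y\<in>pcar X. pleq X y x} \<subseteq> {y\<in>pcar X. pleq X y x'}"
      using po_trans[OF PX _ x x'] le by blast
    then show ?thesis using fm[OF x x' le] unfolding Y_def Yl_def m_def by simp
  qed
  have "Emb G X Y m"
    unfolding Emb_def smap_triv[OF X TY]
  proof (intro conjI ballI impI)
    fix x assume x: "x \<in> pcar X"
    have "\<forall>s\<in>{y\<in>pcar X. pleq X y x}. pleq B (f s) (f x)" using fm x by blast
    then show "m x \<in> pcar Y" using x fi unfolding Y_def Yc_def m_def by simp
  next
    fix x x' assume x: "x \<in> pcar X" and x': "x' \<in> pcar X" and le: "pleq X x x'"
    show "pleq Y (m x) (m x')" by (rule mono_m[OF x x' le])
  next
    fix x x' assume x: "x \<in> pcar X" and x': "x' \<in> pcar X"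
    show "pleq Y (m x) (m x') = pleq X x x'"
    proof
      assume "pleq Y (m x) (m x')"
      then have "{y\<in>pcar X. pleq X y x} \<subseteq> {y\<in>pcar X. pleq X y x'}" unfolding Y_def Yl_def m_def by simp
      moreover have "pleq X x x" using po_refl[OF PX x] .
      ultimately show "pleq X x x'" using x by blast
    next
      assume le: "pleq X x x'"
      show "pleq Y (m x) (m x')" by (rule mono_m[OF x x' le])
    qed
  qed
  moreover have "Top G Y B fst"
  proof (rule top_intro)
    show "S_map G Y B fst" unfolding smap_triv[OF TY B] by (simp add: Y_def Yc_def Yl_def)
    show "is_poset (pcar Y) (pleq Y)" using PY by (simp add: Y_def)
    show "is_poset (pcar B) (pleq B)" by fact
    fix b A assume b: "b \<in> pcar B" and A: "A \<subseteq> pcar Y" and h: "\<forall>a\<in>A. pleq B b (fst a)"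
    define x where "x = (b, {s\<in>pcar X. pleq B (f s) b \<and> (\<forall>a\<in>A. s \<in> snd a)})"
    show "\<exists>x. x \<in> pcar Y \<and> fst x = b \<and> (\<forall>a\<in>A. pleq Y x a) \<and>
        (\<forall>z\<in>pcar Y. pleq B (fst z) b \<and> (\<forall>a\<in>A. pleq Y z a) \<longrightarrow> pleq Y z x)"
    proof (intro exI[of _ x] conjI ballI impI)
      show "x \<in> pcar Y" using b unfolding x_def Y_def Yc_def by simp
      show "fst x = b" by (simp add: x_def)
      fix a assume "a \<in> A" then show "pleq Y x a" using h unfolding x_def Y_def Yl_def by auto
    next
      fix z assume z: "z \<in> pcar Y" and hz: "pleq B (fst z) b \<and> (\<forall>a\<in>A. pleq Y z a)"
      have zc: "fst z \<in> pcar B" "snd z \<subseteq> pcar X" "\<forall>s\<in>snd z. pleq B (f s) (fst z)"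
        using z unfolding Y_def Yc_def by auto
      have "\<forall>s\<in>snd z. pleq B (f s) b"
      proof
        fix s assume s: "s \<in> snd z"
        have "s \<in> pcar X" using zc s by blast
        then show "pleq B (f s) b" using po_trans[OF PB fi zc(1) b] zc(3) s hz by blast
      qed
      moreover have "\<forall>a\<in>A. snd z \<subseteq> snd a" using hz unfolding Y_def Yl_def by simp
      ultimately show "pleq Y z x" using zc hz unfolding Y_def Yl_def x_def by auto
    qed
  qed
  ultimately show ?thesis using TY by (intro exI[of _ Y] exI[of _ m] exI[of _ fst]) (simp add: m_def)
qed


lemma part2:
  assumes A: "triv_S_poset G leS (A::('a,'s) spos)" and B: "triv_S_poset G leS (B::('b,'s) spos)"
    and C: "triv_S_poset G leS (C::('c,'s) spos)" and D: "triv_S_poset G leS (D::('d,'s) spos)"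
    and l: "Emb G A B l" and r: "Top G C D r"
  shows "has_lift G A B l C D r"
  unfolding has_lift_def
proof (intro allI impI)
  fix u v assume u: "S_map G A C u" and v: "S_map G B D v" and comm: "\<forall>a\<in>pcar A. r (u a) = v (l a)"
  have PB: "is_poset (pcar B) (pleq B)" and PC: "is_poset (pcar C) (pleq C)" and PD: "is_poset (pcar D) (pleq D)"
    using B C D triv_poset by blast+
  have ui: "\<And>x. x\<in>pcar A \<Longrightarrow> u x \<in> pcar C" and um: "\<And>x x'. x\<in>pcar A \<Longrightarrow> x'\<in>pcar A \<Longrightarrow> pleq A x x' \<Longrightarrow> pleq C (u x) (u x')"
    using u smap_triv[OF A C] by blast+
  have vi: "\<And>x. x\<in>pcar B \<Longrightarrow> v x \<in> pcar D" and vm: "\<And>x x'. x\<in>pcar B \<Longrightarrow> x'\<in>pcar B \<Longrightarrow> pleq B x x' \<Longrightarrow> pleq D (v x) (v x')"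
    using v smap_triv[OF B D] by blast+
  have li: "\<And>x. x\<in>pcar A \<Longrightarrow> l x \<in> pcar B" and lr: "\<And>x x'. x\<in>pcar A \<Longrightarrow> x'\<in>pcar A \<Longrightarrow> pleq B (l x) (l x') \<Longrightarrow> pleq A x x'"
    using l smap_triv[OF A B] unfolding Emb_def by simp_all
  have ri: "\<And>x. x\<in>pcar C \<Longrightarrow> r x \<in> pcar D"
  proof -
    have "S_map G C D r" using r unfolding Top_def by (rule conjunct1)
    then show "\<And>x. x\<in>pcar C \<Longrightarrow> r x \<in> pcar D" using smap_triv[OF C D] by blast
  qed
  define F where "F = (\<lambda>b. u ` {a\<in>pcar A. pleq B b (l a)})"
  define P where "P = (\<lambda>b x. x \<in> pcar C \<and> r x = v b \<and> (\<forall>a\<in>F b. pleq C x a) \<and>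
        (\<forall>z\<in>pcar C. pleq D (r z) (v b) \<and> (\<forall>a\<in>F b. pleq C z a) \<longrightarrow> pleq C z x))"
  define d where "d = (\<lambda>b. SOME x. P b x)"
  have Pd: "P b (d b)" if b: "b \<in> pcar B" for b
  proof -
    have "F b \<subseteq> pcar C" unfolding F_def using ui by blast
    moreover have "\<forall>y\<in>F b. pleq D (v b) (r y)"
    proof
      fix y assume "y \<in> F b"
      then obtain a where a: "a \<in> pcar A" "pleq B b (l a)" "y = u a" unfolding F_def by blast
      show "pleq D (v b) (r y)" using vm[OF b li[OF a(1)] a(2)] comm a by simp
    qed
    ultimately have "\<exists>x. P b x" unfolding P_def using top_ex[OF r vi[OF b]] by blast
    then show ?thesis unfolding d_def by (rule someI_ex)
  qed
  show "\<exists>d. S_map G B C d \<and> (\<forall>a\<in>pcar A. d (l a) = u a) \<and> (\<forall>b\<in>pcar B. r (d b) = v b)"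
  proof (intro exI[of _ d] conjI ballI)
    show "S_map G B C d" unfolding smap_triv[OF B C]
    proof (intro conjI ballI impI)
      fix b assume "b \<in> pcar B" then show "d b \<in> pcar C" using Pd unfolding P_def by blast
    next
      fix b b' assume b: "b \<in> pcar B" and b': "b' \<in> pcar B" and le: "pleq B b b'"
      have P1: "P b (d b)" and P2: "P b' (d b')" using Pd b b' by blast+
      have "\<forall>a\<in>F b'. pleq C (d b) a"
      proof
        fix y assume "y \<in> F b'"
        then obtain a where a: "a \<in> pcar A" "pleq B b' (l a)" "y = u a" unfolding F_def by blast
        have "pleq B b (l a)" using po_trans[OF PB b b' li[OF a(1)] le a(2)] .
        then have "y \<in> F b" using a unfolding F_def by blast
        then show "pleq C (d b) y" using P1 unfolding P_def by blast
      qed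
      moreover have "pleq D (r (d b)) (v b')" using P1 vm[OF b b' le] unfolding P_def by simp
      ultimately show "pleq C (d b) (d b')" using P1 P2 unfolding P_def by blast
    qed
  next
    fix a assume a: "a \<in> pcar A"
    have la: "l a \<in> pcar B" using li[OF a] .
    have P1: "P (l a) (d (l a))" using Pd[OF la] .
    have "u a \<in> F (l a)" unfolding F_def using a po_refl[OF PB la] by blast
    then have "pleq C (d (l a)) (u a)" using P1 unfolding P_def by blast
    moreover have "pleq C (u a) (d (l a))"
    proof -
      have "\<forall>y\<in>F (l a). pleq C (u a) y"
      proof
        fix y assume "y \<in> F (l a)"
        then obtain a' where a': "a' \<in> pcar A" "pleq B (l a) (l a')" "y = u a'" unfolding F_def by blast
        show "pleq C (u a) y" using um[OF a a'(1) lr[OF a a'(1) a'(2)]] a'(3) by simp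
      qed
      moreover have "pleq D (r (u a)) (v (l a))" using comm a po_refl[OF PD vi[OF la]] by simp
      ultimately show ?thesis using P1 ui[OF a] unfolding P_def by blast
    qed
    ultimately show "d (l a) = u a" using po_antisym[OF PC] P1 ui[OF a] unfolding P_def by blast
  next
    fix b assume "b \<in> pcar B" then show "r (d b) = v b" using Pd unfolding P_def by blast
  qed
qed


lemma part3:
  assumes C: "triv_S_poset G leS (C::('c,'s) spos)" and D: "triv_S_poset G leS (D::('d,'s) spos)"
    and r: "S_map G C D r"
    and H: "\<forall>(P :: ('c, 's) spos) (Q :: ('c option, 's) spos) l.
          triv_S_poset G leS P \<and> triv_S_poset G leS Q \<and> Emb G P Q l \<longrightarrow> has_lift G P Q l C D r"
  shows "Top G C D r"
proof -
  have PC: "is_poset (pcar C) (pleq C)" and PD: "is_poset (pcar D) (pleq D)"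
    using C D triv_poset by blast+
  have ri: "\<And>x. x\<in>pcar C \<Longrightarrow> r x \<in> pcar D" and rm: "\<And>x x'. x\<in>pcar C \<Longrightarrow> x'\<in>pcar C \<Longrightarrow> pleq C x x' \<Longrightarrow> pleq D (r x) (r x')"
    using r smap_triv[OF C D] by blast+
  show ?thesis
  proof (rule top_intro[OF r PC PD])
    fix b A assume b: "b \<in> pcar D" and A: "A \<subseteq> pcar C" and h: "\<forall>a\<in>A. pleq D b (r a)"
    define T where "T = {z\<in>pcar C. pleq D (r z) b \<and> (\<forall>a\<in>A. pleq C z a)}"
    show "\<exists>x. x \<in> pcar C \<and> r x = b \<and> (\<forall>a\<in>A. pleq C x a) \<and>
        (\<forall>z\<in>pcar C. pleq D (r z) b \<and> (\<forall>a\<in>A. pleq C z a) \<longrightarrow> pleq C z x)"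
    proof (cases "\<exists>a0\<in>A. a0 \<in> T")
      case True
      then obtain a0 where a0: "a0 \<in> A" "a0 \<in> T" by blast
      have a0C: "a0 \<in> pcar C" using a0 A by blast
      have "r a0 = b" using po_antisym[OF PD ri[OF a0C] b] a0 h unfolding T_def by blast
      then show ?thesis using a0 a0C unfolding T_def by blast
    next
      case False
      define Pc where "Pc = T \<union> A"
      define ql where "ql = (\<lambda>x y. case x of
          Some p \<Rightarrow> (case y of Some q \<Rightarrow> pleq C p q | None \<Rightarrow> p \<in> T)
        | None \<Rightarrow> (case y of Some q \<Rightarrow> q \<notin> T \<and> (\<exists>a\<in>A. pleq C a q) | None \<Rightarrow> True))"
      define Qc where "Qc = Some ` Pc \<union> {None}"
      define P where "P = (\<lparr>pcar = Pc, pleq = pleq C, pact = (\<lambda>x s. x)\<rparr> :: ('c, 's) spos)"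
      define Q where "Q = (\<lparr>pcar = Qc, pleq = ql, pact = (\<lambda>x s. x)\<rparr> :: ('c option, 's) spos)"
      have PcC: "Pc \<subseteq> pcar C" unfolding Pc_def T_def using A by blast
      have Tdown: "y \<in> T" if "y \<in> pcar C" "z \<in> T" "pleq C y z" for y z
      proof -
        have z: "z \<in> pcar C" "pleq D (r z) b" "\<forall>a\<in>A. pleq C z a" using that(2) unfolding T_def by auto
        have "pleq D (r y) b" using po_trans[OF PD ri[OF that(1)] ri[OF z(1)] b] rm[OF that(1) z(1) that(3)] z(2) by blast
        moreover have "\<forall>a\<in>A. pleq C y a" using po_trans[OF PC that(1) z(1)] that(3) z(3) A by blast
        ultimately show ?thesis using that(1) unfolding T_def by blast
      qed
      have PP: "is_poset Pc (pleq C)"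
        using PcC PC unfolding is_poset_def by (meson subsetD)
      have PQ: "is_poset Qc ql"
      proof (rule po_intro)
        fix x assume "x \<in> Qc" then show "ql x x" unfolding Qc_def ql_def
          using po_refl[OF PC] PcC by (auto split: option.split)
      next
        fix x y assume x: "x \<in> Qc" and y: "y \<in> Qc" and xy: "ql x y" and yx: "ql y x"
        show "x = y"
        proof (cases x; cases y)
          fix p q assume "x = Some p" "y = Some q"
          then show "x = y" using x y xy yx po_antisym[OF PC] PcC unfolding Qc_def ql_def by auto
        qed (use xy yx in \<open>auto simp: ql_def\<close>)
      next
        fix x y z assume x: "x \<in> Qc" and y: "y \<in> Qc" and z: "z \<in> Qc" and xy: "ql x y" and yz: "ql y z"
        show "ql x z"
        proof (cases x; cases y; cases z)
          fix p q s assume e: "x = Some p" "y = Some q" "z = Some s"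
          then have pc: "p \<in> pcar C" "q \<in> pcar C" "s \<in> pcar C" using x y z PcC unfolding Qc_def by auto
          have "pleq C p q" "pleq C q s" using e xy yz unfolding ql_def by simp_all
          then have "pleq C p s" by (rule po_trans[OF PC pc])
          then show ?thesis using e unfolding ql_def by simp
        next
          fix p q assume e: "x = Some p" "y = Some q" "z = None"
          then have pc: "p \<in> pcar C" "q \<in> pcar C" using x y PcC unfolding Qc_def by auto
          have "pleq C p q" "q \<in> T" using e xy yz unfolding ql_def by simp_all
          then have "p \<in> T" using Tdown[OF pc(1)] by blast
          then show ?thesis using e unfolding ql_def by simp
        next
          fix p s assume e: "x = Some p" "y = None" "z = Some s"
          then have pc: "p \<in> pcar C" "s \<in> pcar C" using x z PcC unfolding Qc_def by auto
          have pT: "p \<in> T" and sT: "s \<notin> T" and ex: "\<exists>a\<in>A. pleq C a s" using e xy yz unfolding ql_def by simp_all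
          then obtain a where a: "a \<in> A" "pleq C a s" by blast
          have "pleq C p a" using pT a(1) unfolding T_def by blast
          then have "pleq C p s" using po_trans[OF PC pc(1) _ pc(2)] a A by blast
          then show ?thesis using e unfolding ql_def by simp
        next
          fix q s assume e: "x = None" "y = Some q" "z = Some s"
          then have pc: "q \<in> pcar C" "s \<in> pcar C" using y z PcC unfolding Qc_def by auto
          have qT: "q \<notin> T" and ex: "\<exists>a\<in>A. pleq C a q" and qs: "pleq C q s" using e xy yz unfolding ql_def by simp_all
          then obtain a where a: "a \<in> A" "pleq C a q" by blast
          have "pleq C a s" using po_trans[OF PC _ pc] a A qs by blast
          moreover have "s \<notin> T" using Tdown[OF pc(1) _ qs] qT by blast
          ultimately show ?thesis using e a(1) unfolding ql_def by auto
        qed (use xy yz in \<open>auto simp: ql_def\<close>)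
      qed
      have TP: "triv_S_poset G leS P" unfolding P_def by (rule triv_mk[OF PP])
      have TQ: "triv_S_poset G leS Q" unfolding Q_def by (rule triv_mk[OF PQ])
      have E: "Emb G P Q Some"
        unfolding Emb_def smap_triv[OF TP TQ] by (simp add: P_def Q_def Qc_def ql_def)
      define v where "v = (\<lambda>q. case q of Some p \<Rightarrow> r p | None \<Rightarrow> b)"
      have hl: "has_lift G P Q Some C D r" using H TP TQ E by blast
      have su: "S_map G P C id" unfolding smap_triv[OF TP C] using PcC by (auto simp: P_def)
      have sv: "S_map G Q D v" unfolding smap_triv[OF TQ D]
      proof (intro conjI ballI impI)
        fix x assume "x \<in> pcar Q" then show "v x \<in> pcar D" using ri PcC b
          unfolding Q_def Qc_def v_def by auto
      next
        fix x y assume x: "x \<in> pcar Q" and y: "y \<in> pcar Q" and xy: "pleq Q x y"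
        show "pleq D (v x) (v y)"
        proof (cases x; cases y)
          fix p q assume e: "x = Some p" "y = Some q"
          then have "p \<in> pcar C" "q \<in> pcar C" using x y PcC unfolding Q_def Qc_def by auto
          then show ?thesis using e xy rm unfolding Q_def ql_def v_def by auto
        next
          fix p assume e: "x = Some p" "y = None"
          then show ?thesis using xy unfolding Q_def ql_def v_def T_def by auto
        next
          fix q assume e: "x = None" "y = Some q"
          then have qC: "q \<in> pcar C" using y PcC unfolding Q_def Qc_def by auto
          obtain a where a: "a \<in> A" "pleq C a q" using e xy unfolding Q_def ql_def by auto
          have aC: "a \<in> pcar C" using a A by blast
          have "pleq D b (r q)" using po_trans[OF PD b ri[OF aC] ri[OF qC]] h a rm[OF aC qC] by blast
          then show ?thesis using e unfolding v_def by simp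
        next
          assume "x = None" "y = None" then show ?thesis using po_refl[OF PD b] unfolding v_def by simp
        qed
      qed
      have cm: "\<forall>a\<in>pcar P. r (id a) = v (Some a)" by (simp add: v_def)
      obtain d where d: "S_map G Q C d" "\<forall>a\<in>pcar P. d (Some a) = id a" "\<forall>q\<in>pcar Q. r (d q) = v q"
        using hl su sv cm unfolding has_lift_def by blast
      have di: "\<And>x. x\<in>pcar Q \<Longrightarrow> d x \<in> pcar C" and dm: "\<And>x x'. x\<in>pcar Q \<Longrightarrow> x'\<in>pcar Q \<Longrightarrow> pleq Q x x' \<Longrightarrow> pleq C (d x) (d x')"
        using d(1) smap_triv[OF TQ C] by blast+
      have NQ: "None \<in> pcar Q" by (simp add: Q_def Qc_def)
      show ?thesis
      proof (intro exI[of _ "d None"] conjI ballI impI)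
        show "d None \<in> pcar C" using di[OF NQ] .
        show "r (d None) = b" using d(3) NQ by (simp add: v_def)
      next
        fix a assume a: "a \<in> A"
        have aQ: "Some a \<in> pcar Q" using a by (simp add: Q_def Qc_def Pc_def)
        have aT: "a \<notin> T" using False a by blast
        have "pleq Q None (Some a)" using a aT po_refl[OF PC] A by (auto simp: Q_def ql_def)
        then have "pleq C (d None) (d (Some a))" using dm[OF NQ aQ] by blast
        then show "pleq C (d None) a" using d(2) a by (simp add: P_def Pc_def)
      next
        fix z assume z: "z \<in> pcar C" and hz: "pleq D (r z) b \<and> (\<forall>a\<in>A. pleq C z a)"
        have zT: "z \<in> T" using z hz unfolding T_def by blast
        have zQ: "Some z \<in> pcar Q" using zT by (simp add: Q_def Qc_def Pc_def)
        have "pleq Q (Some z) None" using zT by (simp add: Q_def ql_def)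
        then have "pleq C (d (Some z)) (d None)" using dm[OF zQ NQ] by blast
        then show "pleq C z (d None)" using d(2) zT by (simp add: P_def Pc_def)
      qed
    qed
  qed
qed


lemma part4:
  assumes A: "triv_S_poset G leS (A::('a,'s) spos)" and B: "triv_S_poset G leS (B::('b,'s) spos)"
    and l: "S_map G A B l"
    and H: "\<forall>(C :: ('a set, 's) spos) (D :: (unit, 's) spos) r.
          triv_S_poset G leS C \<and> triv_S_poset G leS D \<and> Top G C D r \<longrightarrow> has_lift G A B l C D r"
  shows "Emb G A B l"
proof -
  have PA: "is_poset (pcar A) (pleq A)" using A triv_poset by blast
  have li: "\<And>x. x\<in>pcar A \<Longrightarrow> l x \<in> pcar B" and lm: "\<And>x x'. x\<in>pcar A \<Longrightarrow> x'\<in>pcar A \<Longrightarrow> pleq A x x' \<Longrightarrow> pleq B (l x) (l x')"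
    using l smap_triv[OF A B] by blast+
  define C where "C = (\<lparr>pcar = Pow (pcar A), pleq = (\<subseteq>), pact = (\<lambda>x s. x)\<rparr> :: ('a set, 's) spos)"
  define D where "D = (\<lparr>pcar = UNIV, pleq = (\<lambda>_ _. True), pact = (\<lambda>x s. x)\<rparr> :: (unit, 's) spos)"
  have PC: "is_poset (Pow (pcar A)) (\<subseteq>)" by (rule po_intro) auto
  have PD: "is_poset (UNIV::unit set) (\<lambda>_ _. True)" by (rule po_intro) auto
  have TC: "triv_S_poset G leS C" unfolding C_def by (rule triv_mk[OF PC])
  have TD: "triv_S_poset G leS D" unfolding D_def by (rule triv_mk[OF PD])
  have sr: "S_map G C D (\<lambda>_. ())" unfolding smap_triv[OF TC TD] by (simp add: D_def)
  have top: "Top G C D (\<lambda>_. ())"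
  proof (rule top_intro[OF sr])
    show "is_poset (pcar C) (pleq C)" using PC by (simp add: C_def)
    show "is_poset (pcar D) (pleq D)" using PD by (simp add: D_def)
    fix b :: unit and F assume "F \<subseteq> pcar C"
    then have F: "F \<subseteq> Pow (pcar A)" by (simp add: C_def)
    show "\<exists>x. x \<in> pcar C \<and> () = b \<and> (\<forall>a\<in>F. pleq C x a) \<and>
        (\<forall>z\<in>pcar C. pleq D () b \<and> (\<forall>a\<in>F. pleq C z a) \<longrightarrow> pleq C z x)"
      by (rule exI[of _ "pcar A \<inter> \<Inter>F"]) (auto simp: C_def)
  qed
  have hl: "has_lift G A B l C D (\<lambda>_. ())" using H TC TD top by blast
  define u where "u = (\<lambda>x. {y\<in>pcar A. pleq A y x})"
  have su: "S_map G A C u" unfolding smap_triv[OF A TC]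
  proof (intro conjI ballI impI)
    fix x assume "x \<in> pcar A" then show "u x \<in> pcar C" by (auto simp: C_def u_def)
  next
    fix x x' assume x: "x \<in> pcar A" and x': "x' \<in> pcar A" and le: "pleq A x x'"
    have "u x \<subseteq> u x'" unfolding u_def using po_trans[OF PA _ x x'] le by blast
    then show "pleq C (u x) (u x')" by (simp add: C_def)
  qed
  have sv: "S_map G B D (\<lambda>_. ())" unfolding smap_triv[OF B TD] by (simp add: D_def)
  obtain d where d: "S_map G B C d" "\<forall>a\<in>pcar A. d (l a) = u a"
    using hl[unfolded has_lift_def, rule_format, OF su sv] by auto
  have dm: "\<And>x x'. x\<in>pcar B \<Longrightarrow> x'\<in>pcar B \<Longrightarrow> pleq B x x' \<Longrightarrow> pleq C (d x) (d x')"
    using d(1) smap_triv[OF B TC] by blast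
  show ?thesis unfolding Emb_def
  proof (intro conjI ballI iffI)
    show "S_map G A B l" by fact
  next
    fix x x' assume x: "x \<in> pcar A" and x': "x' \<in> pcar A" and le: "pleq B (l x) (l x')"
    have "pleq C (d (l x)) (d (l x'))" using dm[OF li[OF x] li[OF x'] le] .
    then have "u x \<subseteq> u x'" using d(2) x x' by (simp add: C_def)
    moreover have "x \<in> u x" using x po_refl[OF PA x] by (simp add: u_def)
    ultimately have "x \<in> u x'" by (rule subsetD)
    then show "pleq A x x'" by (simp add: u_def)
  next
    fix x x' assume "x \<in> pcar A" "x' \<in> pcar A" "pleq A x x'"
    then show "pleq B (l x) (l x')" by (rule lm)
  qed
qed

theorem mainTheorem10:
  fixes G :: "'s monoid" and leS :: "'s \<Rightarrow> 's \<Rightarrow> bool"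
  assumes "pogroup G leS"
  shows
   "(\<forall>(X :: ('a, 's) spos) (B :: ('b, 's) spos) f.
       triv_S_poset G leS X \<and> triv_S_poset G leS B \<and> S_map G X B f \<longrightarrow>
       (\<exists>(Y :: ('b \<times> 'a set, 's) spos) m g.
          triv_S_poset G leS Y \<and> Emb G X Y m \<and> Top G Y B g \<and>
          (\<forall>x\<in>pcar X. g (m x) = f x)))
    \<and> (\<forall>(A :: ('a, 's) spos) (B :: ('b, 's) spos) l (C :: ('c, 's) spos) (D :: ('d, 's) spos) r.
       triv_S_poset G leS A \<and> triv_S_poset G leS B \<and> triv_S_poset G leS C \<and> triv_S_poset G leS D \<and>
       Emb G A B l \<and> Top G C D r \<longrightarrow> has_lift G A B l C D r)
    \<and> (\<forall>(C :: ('c, 's) spos) (D :: ('d, 's) spos) r.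
       triv_S_poset G leS C \<and> triv_S_poset G leS D \<and> S_map G C D r \<and>
       (\<forall>(P :: ('c, 's) spos) (Q :: ('c option, 's) spos) l.
          triv_S_poset G leS P \<and> triv_S_poset G leS Q \<and> Emb G P Q l \<longrightarrow> has_lift G P Q l C D r)
       \<longrightarrow> Top G C D r)
    \<and> (\<forall>(A :: ('a, 's) spos) (B :: ('b, 's) spos) l.
       triv_S_poset G leS A \<and> triv_S_poset G leS B \<and> S_map G A B l \<and>
       (\<forall>(C :: ('a set, 's) spos) (D :: (unit, 's) spos) r.
          triv_S_poset G leS C \<and> triv_S_poset G leS D \<and> Top G C D r \<longrightarrow> has_lift G A B l C D r)
       \<longrightarrow> Emb G A B l)"
proof (intro conjI allI impI)
  fix X :: "('a, 's) spos" and B :: "('b, 's) spos" and f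
  assume "triv_S_poset G leS X \<and> triv_S_poset G leS B \<and> S_map G X B f"
  then show "\<exists>(Y :: ('b \<times> 'a set, 's) spos) m g.
          triv_S_poset G leS Y \<and> Emb G X Y m \<and> Top G Y B g \<and>
          (\<forall>x\<in>pcar X. g (m x) = f x)" using part1 by blast
next
  fix A :: "('a, 's) spos" and B :: "('b, 's) spos" and l and C :: "('c, 's) spos" and D :: "('d, 's) spos" and r
  assume "triv_S_poset G leS A \<and> triv_S_poset G leS B \<and> triv_S_poset G leS C \<and> triv_S_poset G leS D \<and>
       Emb G A B l \<and> Top G C D r"
  then show "has_lift G A B l C D r" using part2 by blast
next
  fix C :: "('c, 's) spos" and D :: "('d, 's) spos" and r
  assume h: "triv_S_poset G leS C \<and> triv_S_poset G leS D \<and> S_map G C D r \<and>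
       (\<forall>(P :: ('c, 's) spos) (Q :: ('c option, 's) spos) l.
          triv_S_poset G leS P \<and> triv_S_poset G leS Q \<and> Emb G P Q l \<longrightarrow> has_lift G P Q l C D r)"
  show "Top G C D r" using part3[of G leS C D r] h by blast
next
  fix A :: "('a, 's) spos" and B :: "('b, 's) spos" and l
  assume h: "triv_S_poset G leS A \<and> triv_S_poset G leS B \<and> S_map G A B l \<and>
       (\<forall>(C :: ('a set, 's) spos) (D :: (unit, 's) spos) r.
          triv_S_poset G leS C \<and> triv_S_poset G leS D \<and> Top G C D r \<longrightarrow> has_lift G A B l C D r)"
  show "Emb G A B l" using part4[of G leS A B l] h by blast
qed

end
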